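(* Let $\mathcal E$ be a finite dimensional Hilbert space, $A$ a self-adjoint operator and $B$ a positive contraction on $\mathcal E$, and let $\zeta(z)=\frac{z+1}{z-1}$ for $z\in\mathbb D$. Then $iA+\zeta(z)B-I$ is invertible for every $z\in\mathbb D$, and the function $\psi(z)=(iA+\zeta(z)B+I)(iA+\zeta(z)B-I)^{-1}$ belongs to $\mathcal C$ and satisfies $$0\ge\operatorname{Re}\big[(\psi(z)+I)(\psi(z)-I)^{-1}\big]\ge\operatorname{Re}\big[(z+1)(z-1)^{-1}\big]I\quad\text{for all }z\in\mathbb D.$$
   Context: $\mathbb D$ is the open unit disc. $\mathcal C=\{\psi\in H^\infty_{\mathbb D}(\mathcal B(\mathcal E)):\sup_z\|\psi(z)\|\le1,\ 1\text{ is not an eigenvalue of }\psi(z)\text{ for any }z\in\mathbb D\}$. For an operator $X$, $\operatorname{Re}X=(X+X^* )/2$, and inequalities between self-adjoint operators are in the usual operator order. *)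

theory Defs
  imports "HOL-Complex_Analysis.Complex_Analysis"
begin

text \<open>Operators on the finite dimensional Hilbert space E = complex^'n are complex
  'n x 'n matrices acting by (*v); the norm on complex^'n is the Euclidean (Hilbert) norm.\<close>

definition cinner :: "complex^'n \<Rightarrow> complex^'n \<Rightarrow> complex" where
  "cinner x y = (\<Sum>i\<in>UNIV. x$i * cnj (y$i))"

definition adj :: "complex^'n^'n \<Rightarrow> complex^'n^'n" where
  "adj M = (\<chi> i j. cnj (M$j$i))"

definition mscale :: "complex \<Rightarrow> complex^'n^'n \<Rightarrow> complex^'n^'n" where
  "mscale c M = (\<chi> i j. c * M$i$j)"

definition self_adjoint :: "complex^'n^'n \<Rightarrow> bool" where
  "self_adjoint M \<longleftrightarrow> adj M = M"

definition ReOp :: "complex^'n^'n \<Rightarrow> complex^'n^'n" where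
  "ReOp X = mscale (1/2) (X + adj X)"

definition op_le :: "complex^'n^'n \<Rightarrow> complex^'n^'n \<Rightarrow> bool" where
  "op_le X Y \<longleftrightarrow> (\<forall>x. Im (cinner ((Y - X) *v x) x) = 0 \<and> Re (cinner ((Y - X) *v x) x) \<ge> 0)"

definition opnorm :: "complex^'n^'n \<Rightarrow> real" where
  "opnorm M = onorm (\<lambda>x. M *v x)"

text \<open>The class C: bounded analytic B(E)-valued functions on the unit disc
  (analyticity entrywise, equivalent in finite dimension) with sup norm \<le> 1 and
  such that 1 is not an eigenvalue of psi(z) for any z in the disc.\<close>
definition classC :: "(complex \<Rightarrow> complex^'n^'n) \<Rightarrow> bool" where
  "classC \<psi> \<longleftrightarrow>
     (\<forall>i j. (\<lambda>z. \<psi> z $ i $ j) holomorphic_on ball 0 1) \<and>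
     (\<forall>z\<in>ball 0 1. opnorm (\<psi> z) \<le> 1) \<and>
     (\<forall>z\<in>ball 0 1. \<forall>v. \<psi> z *v v = v \<longrightarrow> v = 0)"

end

theory Submission imports Defs begin

no_notation fps_nth (infixl \<open>$\<close> 75)


lemma cinner_add_left: "cinner (x + y) z = cinner x z + cinner y z"
  by (simp add: cinner_def distrib_right sum.distrib)
lemma cinner_diff_left: "cinner (x - y) z = cinner x z - cinner y z"
  by (simp add: cinner_def left_diff_distrib sum_subtractf)
lemma cinner_scale_left: "cinner (c *s x) z = c * cinner x z"
  by (simp add: cinner_def sum_distrib_left mult.assoc)
lemma cinner_commute: "cinner y x = cnj (cinner x y)"
  by (simp add: cinner_def mult.commute)
lemma Re_cinner: "Re (cinner x y) = inner x y"
  by (simp add: cinner_def inner_vec_def inner_complex_def Re_sum)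
lemma cinner_self: "cinner x x = of_real ((norm x)^2)"
proof -
  have "Im (cinner x x) = 0" by (simp add: cinner_def Im_sum)
  moreover have "Re (cinner x x) = (norm x)^2" by (simp add: Re_cinner power2_norm_eq_inner)
  ultimately show ?thesis by (simp add: complex_eq_iff)
qed
lemma mscale_mv: "mscale c M *v x = c *s (M *v x)"
  by (simp add: mscale_def matrix_vector_mult_def vec_eq_iff sum_distrib_left mult.assoc)
lemma cinner_mscale: "cinner (mscale c M *v x) y = c * cinner (M *v x) y"
  by (simp add: mscale_mv cinner_scale_left)
lemma cinner_adj: "cinner (adj M *v x) y = cinner x (M *v y)"
  unfolding cinner_def adj_def matrix_vector_mult_def
  by (simp add: sum_distrib_left sum_distrib_right mult_ac) (rule sum.swap)
lemma cinner_ReOp: "cinner (ReOp X *v x) x = of_real (Re (cinner (X *v x) x))"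
proof -
  have "cinner (ReOp X *v x) x = (1/2) * (cinner (X *v x) x + cinner (adj X *v x) x)"
    by (simp add: ReOp_def cinner_mscale matrix_vector_mult_add_rdistrib cinner_add_left)
  also have "cinner (adj X *v x) x = cnj (cinner (X *v x) x)"
    by (simp add: cinner_adj cinner_commute[of x])
  finally show ?thesis by (simp add: complex_eq_iff)
qed
lemma op_le_iff: "op_le X Y \<longleftrightarrow> (\<forall>x. Im (cinner (Y *v x) x) = Im (cinner (X *v x) x) \<and> Re (cinner (X *v x) x) \<le> Re (cinner (Y *v x) x))"
  by (simp add: op_le_def matrix_vector_mult_diff_rdistrib cinner_diff_left)
lemma mat_mult_left: "mat c ** M = mscale c M"
proof -
  have "\<And>i j. (\<Sum>k\<in>UNIV. (if i = k then c else 0) * M$k$j) = c * M$i$j"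
    by (simp add: if_distrib[where f="\<lambda>a. a * b" for b] sum.delta cong: if_cong)
  thus ?thesis by (simp add: mscale_def matrix_matrix_mult_def mat_def vec_eq_iff)
qed
lemma mat_mult_right: "M ** mat c = mscale c M"
  by (simp add: mscale_def matrix_matrix_mult_def mat_def vec_eq_iff if_distrib sum.delta mult.commute cong: if_cong)
lemma matrix_inv_unique: fixes X :: "'a::field^'n^'n" assumes "X ** Y = mat 1" shows "matrix_inv X = Y" "invertible X"
proof -
  have YX: "Y ** X = mat 1" using assms matrix_left_right_inverse by blast
  show inv: "invertible X" using assms YX invertible_def by blast
  have "X ** matrix_inv X = mat 1 \<and> matrix_inv X ** X = mat 1"
    unfolding matrix_inv_def by (rule someI[of _ Y]) (simp add: assms YX)
  hence "matrix_inv X = matrix_inv X ** (X ** Y)" by (simp add: assms)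
  also have "\<dots> = Y" using \<open>X ** matrix_inv X = mat 1 \<and> matrix_inv X ** X = mat 1\<close>
    by (simp add: matrix_mul_assoc)
  finally show "matrix_inv X = Y" .
qed
lemma matrix_inv_props: fixes X :: "'a::field^'n^'n" assumes "invertible X"
  shows "X ** matrix_inv X = mat 1" "matrix_inv X ** X = mat 1"
proof -
  obtain Y where "X ** Y = mat 1" using assms invertible_def by blast
  thus "X ** matrix_inv X = mat 1" "matrix_inv X ** X = mat 1"
    using matrix_inv_unique matrix_left_right_inverse by metis+
qed

lemma mrdistrib: "(B + C) ** (A::'a::semiring_1^_^_) = B ** A + C ** A"
  by (vector matrix_matrix_mult_def sum.distrib[symmetric] field_simps)
lemma mrdiff: "(B - C) ** (A::'a::ring_1^_^_) = B ** A - C ** A"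
  by (vector matrix_matrix_mult_def sum_subtractf[symmetric] field_simps)
lemma mscale_mat: "mscale a (mat b) = mat (a * b)"
  by (simp add: mscale_def mat_def vec_eq_iff)
lemma mscale_mscale: "mscale a (mscale b M) = mscale (a*b) M"
  by (simp add: mscale_def vec_eq_iff mult.assoc)
lemma mscale_add: "mscale a (M + N) = mscale a M + mscale a N"
  by (simp add: mscale_def vec_eq_iff distrib_left)

lemma holo_det:
  fixes F :: "complex \<Rightarrow> complex^'n^'n"
  assumes "\<And>i j. (\<lambda>z. F z $ i $ j) holomorphic_on S"
  shows "(\<lambda>z. det (F z)) holomorphic_on S"
  unfolding det_def by (intro holomorphic_intros assms)

lemma inv_entry:
  fixes M :: "'a::field^'n^'n"
  assumes "invertible M"
  shows "matrix_inv M $ k $ j = det (\<chi> a b. if b = k then (if a = j then 1 else 0) else M$a$b) / det M"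
proof -
  let ?x = "matrix_inv M *v axis j 1"
  have "M *v ?x = axis j 1"
    using matrix_inv_props(1)[OF assms] by (simp add: matrix_vector_mul_assoc)
  moreover have "det M \<noteq> 0" using assms invertible_det_nz by blast
  ultimately have "?x = (\<chi> k. det(\<chi> i b. if b=k then (axis j 1::'a^'n)$i else M$i$b) / det M)"
    using cramer by blast
  hence "?x $ k = det(\<chi> i b. if b=k then (axis j 1::'a^'n)$i else M$i$b) / det M" by simp
  moreover have "?x $ k = matrix_inv M $ k $ j"
    by (simp add: matrix_vector_mult_def axis_def if_distrib[where f="\<lambda>a. b * a" for b] sum.delta' cong: if_cong)
  moreover have "(\<chi> i b. if b=k then (axis j 1::'a^'n)$i else M$i$b) = (\<chi> a b. if b = k then (if a = j then 1 else 0) else M$a$b)"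
    by (simp add: axis_def vec_eq_iff)
  ultimately show ?thesis by simp
qed

lemma holo_inv:
  fixes F :: "complex \<Rightarrow> complex^'n^'n"
  assumes "\<And>i j. (\<lambda>z. F z $ i $ j) holomorphic_on S" "\<And>z. z \<in> S \<Longrightarrow> invertible (F z)"
  shows "(\<lambda>z. matrix_inv (F z) $ k $ j) holomorphic_on S"
proof -
  define G where "G = (\<lambda>z. (\<chi> a b. if b = k then (if a = j then 1 else 0) else F z$a$b) :: complex^'n^'n)"
  have G: "(\<lambda>z. G z $ a $ b) holomorphic_on S" for a b
    using assms(1)[of a b] by (cases "b = k") (auto simp: G_def)
  have d1: "(\<lambda>z. det (G z)) holomorphic_on S" by (rule holo_det[OF G])
  have d2: "(\<lambda>z. det (F z)) holomorphic_on S" by (rule holo_det[OF assms(1)])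
  have nz: "z \<in> S \<Longrightarrow> det (F z) \<noteq> 0" for z using assms(2) invertible_det_nz by blast
  have "(\<lambda>z. det (G z) / det (F z)) holomorphic_on S"
    by (rule holomorphic_on_divide[OF d1 d2 nz])
  moreover have "z \<in> S \<Longrightarrow> det (G z) / det (F z) = matrix_inv (F z) $ k $ j" for z
    unfolding G_def by (simp add: inv_entry[OF assms(2)])
  ultimately show ?thesis by (rule holomorphic_transform)
qed

lemma Re_zeta: fixes z :: complex assumes "norm z < 1" shows "Re ((z+1)/(z-1)) < 0"
proof -
  have nz: "z - 1 \<noteq> 0" using assms by auto
  have "Re ((z+1)/(z-1)) = ((Re z + 1) * (Re z - 1) + Im z * Im z) / (cmod (z-1))^2"
    unfolding Re_divide' by simp
  moreover have "(Re z + 1) * (Re z - 1) + Im z * Im z = (cmod z)^2 - 1"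
    using cmod_power2[of z] by (simp add: algebra_simps power2_eq_square)
  moreover have "(cmod z)^2 < 1" using assms by (simp add: power_less_one_iff abs_square_less_1)
  moreover have "(cmod (z-1))^2 > 0" using nz by simp
  ultimately show ?thesis by (simp add: divide_neg_pos)
qed

lemma mscale_one: "mscale 1 M = M" by (simp add: mscale_def vec_eq_iff)
lemma mat_add: "mat a + mat b = (mat (a+b) :: 'a::semiring_1^'n^'n)" by (simp add: vec_eq_iff mat_def)
lemma norm_add_sq: fixes a b :: "'a::real_inner" shows "(norm (a+b))^2 = (norm a)^2 + 2 * inner a b + (norm b)^2"
  by (simp add: power2_norm_eq_inner inner_add inner_commute)
lemma norm_diff_sq: fixes a b :: "'a::real_inner" shows "(norm (a-b))^2 = (norm a)^2 - 2 * inner a b + (norm b)^2"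
  by (simp add: power2_norm_eq_inner inner_diff inner_commute)

lemma cinner_real_sa: assumes "self_adjoint A" shows "Im (cinner (A *v y) y) = 0"
proof -
  have "cinner (A *v y) y = cinner (adj A *v y) y" using assms by (simp add: self_adjoint_def)
  also have "\<dots> = cnj (cinner (A *v y) y)" by (simp add: cinner_adj cinner_commute[of y])
  finally show ?thesis by (simp add: complex_eq_iff)
qed

lemma Re_T: assumes "self_adjoint A" "Im (cinner (B *v y) y) = 0"
  shows "Re (cinner ((mscale \<i> A + mscale c B) *v y) y) = Re c * Re (cinner (B *v y) y)"
  using cinner_real_sa[OF assms(1), of y] assms(2)
  by (simp add: matrix_vector_mult_add_rdistrib cinner_add_left cinner_mscale)

lemma B_le: assumes "opnorm B \<le> 1" shows "Re (cinner (B *v y) y) \<le> (norm y)^2"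
proof -
  have a: "norm (B *v y) \<le> opnorm B * norm y"
    unfolding opnorm_def using onorm[OF matrix_vector_mul_bounded_linear[of B]] by simp
  have b: "opnorm B * norm y \<le> 1 * norm y" by (rule mult_right_mono[OF assms norm_ge_zero])
  have c: "norm (B *v y) * norm y \<le> norm y * norm y"
    using a b by (simp add: mult_right_mono)
  have "Re (cinner (B *v y) y) = inner (B *v y) y" by (simp add: Re_cinner)
  also have "\<dots> \<le> norm (B *v y) * norm y" by (rule norm_cauchy_schwarz)
  also have "\<dots> \<le> norm y * norm y" by (rule c)
  finally show ?thesis by (simp add: power2_eq_square)
qed

lemma cayley:
  fixes X :: "complex^'n^'n"
  assumes neg: "\<And>y. Re (cinner (X *v y) y) \<le> 0"
  defines "\<psi> \<equiv> (X + mat 1) ** matrix_inv (X - mat 1)"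
  shows "invertible (X - mat 1)" "opnorm \<psi> \<le> 1" "\<And>v. \<psi> *v v = v \<Longrightarrow> v = 0"
    "(\<psi> + mat 1) ** matrix_inv (\<psi> - mat 1) = X"
proof -
  define M where "M = X - mat 1"
  have ker: "\<forall>y. M *v y = 0 \<longrightarrow> y = 0"
  proof (intro allI impI)
    fix y assume "M *v y = 0"
    hence "X *v y = y" by (simp add: M_def matrix_vector_mult_diff_rdistrib)
    hence "(norm y)^2 \<le> 0" using neg[of y] by (simp add: Re_cinner power2_norm_eq_inner)
    thus "y = 0" by simp
  qed
  show inv: "invertible (X - mat 1)"
    using ker matrix_left_invertible_ker invertible_left_inverse M_def by metis
  define N where "N = matrix_inv M"
  have MN: "M ** N = mat 1" "N ** M = mat 1" using matrix_inv_props inv M_def N_def by auto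
  have P: "X + mat 1 = M + mat 2"
  proof -
    have "X + mat 1 = (X - mat 1) + (mat 1 + mat 1)" by simp
    thus ?thesis by (simp add: mat_add M_def)
  qed
  have psi: "\<psi> = mat 1 + mat 2 ** N"
    unfolding \<psi>_def P by (simp add: mrdistrib MN M_def[symmetric] N_def[symmetric])
  have pm: "\<psi> - mat 1 = mat 2 ** N" by (simp add: psi)
  have pp: "\<psi> + mat 1 = mat 2 ** N + mat 2"
  proof -
    have "\<psi> + mat 1 = mat 2 ** N + (mat 1 + mat 1)" by (simp add: psi)
    thus ?thesis by (simp add: mat_add)
  qed
  have e1: "(mat 2 ** N) ** (M ** mat (1/2)) = mat 1"
  proof -
    have "(mat 2 ** N) ** (M ** mat (1/2)) = mat 2 ** ((N ** M) ** mat (1/2))"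
      by (simp add: matrix_mul_assoc)
    also have "\<dots> = mat 1" by (simp add: MN mat_mult_left mscale_mat)
    finally show ?thesis .
  qed
  have e1': "(M ** mat (1/2)) ** (mat 2 ** N) = mat 1" using e1 matrix_left_right_inverse by blast
  have e2: "mat 2 ** (M ** mat (1/2)) = M" by (simp add: mat_mult_left mat_mult_right mscale_mscale mscale_one)
  have iv: "matrix_inv (\<psi> - mat 1) = M ** mat (1/2)" using pm e1 matrix_inv_unique by metis
  show "(\<psi> + mat 1) ** matrix_inv (\<psi> - mat 1) = X"
  proof -
    have "(\<psi> + mat 1) ** matrix_inv (\<psi> - mat 1) = mat 1 + M"
      unfolding iv pp mrdistrib e1 e2 by simp
    thus ?thesis by (simp add: M_def)
  qed
  show "\<And>v. \<psi> *v v = v \<Longrightarrow> v = 0"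
  proof -
    fix v assume "\<psi> *v v = v"
    hence "(mat 2 ** N) *v v = 0" by (simp add: pm[symmetric] matrix_vector_mult_diff_rdistrib)
    hence "(M ** mat (1/2)) *v ((mat 2 ** N) *v v) = 0" by simp
    thus "v = 0" by (simp add: matrix_vector_mul_assoc e1')
  qed
  show "opnorm \<psi> \<le> 1"
    unfolding opnorm_def
  proof (rule onorm_le)
    fix v
    define y where "y = N *v v"
    have "v = M *v y" using MN(1) by (simp add: y_def matrix_vector_mul_assoc)
    also have "\<dots> = X *v y - y" by (simp add: M_def matrix_vector_mult_diff_rdistrib)
    finally have v: "v = X *v y - y" .
    have pv: "\<psi> *v v = X *v y + y" unfolding \<psi>_def
      by (simp add: matrix_vector_mul_assoc[symmetric] y_def N_def M_def matrix_vector_mult_add_rdistrib)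
    have "inner (X *v y) y \<le> 0" using neg[of y] by (simp add: Re_cinner)
    moreover have "(norm (\<psi> *v v))^2 = (norm (X *v y))^2 + 2 * inner (X *v y) y + (norm y)^2"
      unfolding pv by (rule norm_add_sq)
    moreover have "(norm v)^2 = (norm (X *v y))^2 - 2 * inner (X *v y) y + (norm y)^2"
      by (subst v) (rule norm_diff_sq)
    ultimately have "(norm (\<psi> *v v))^2 \<le> (norm v)^2" by linarith
    hence "norm (\<psi> *v v) \<le> norm v" by (rule power2_le_imp_le) (rule norm_ge_zero)
    thus "norm (\<psi> *v v) \<le> 1 * norm v" by simp
  qed
qed

theorem proposition4p4:
  fixes A B :: "complex^'n^'n"
  assumes "self_adjoint A"
    and "op_le 0 B" and "opnorm B \<le> 1"
  defines "\<zeta> \<equiv> \<lambda>z::complex. (z + 1) / (z - 1)"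
  defines "\<psi> \<equiv> \<lambda>z. (mscale \<i> A + mscale (\<zeta> z) B + mat 1)
                     ** matrix_inv (mscale \<i> A + mscale (\<zeta> z) B - mat 1)"
  shows "(\<forall>z\<in>ball 0 1. invertible (mscale \<i> A + mscale (\<zeta> z) B - mat 1))
       \<and> classC \<psi>
       \<and> (\<forall>z\<in>ball 0 1.
            op_le (ReOp ((\<psi> z + mat 1) ** matrix_inv (\<psi> z - mat 1))) 0
          \<and> op_le (mscale (complex_of_real (Re ((z + 1) / (z - 1)))) (mat 1))
                  (ReOp ((\<psi> z + mat 1) ** matrix_inv (\<psi> z - mat 1))))"
proof -
  define T where "T = (\<lambda>z. mscale \<i> A + mscale (\<zeta> z) B)"
  have psiT: "\<psi> z = (T z + mat 1) ** matrix_inv (T z - mat 1)" for z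
    by (simp add: \<psi>_def T_def)
  have Bpos: "Im (cinner (B *v y) y) = 0" "Re (cinner (B *v y) y) \<ge> 0" for y
    using assms(2) by (simp_all add: op_le_def)
  have ReT: "Re (cinner (T z *v y) y) = Re (\<zeta> z) * Re (cinner (B *v y) y)" for z y
    unfolding T_def by (rule Re_T[OF assms(1) Bpos(1)])
  have zneg: "z \<in> ball 0 1 \<Longrightarrow> Re (\<zeta> z) < 0" for z
    using Re_zeta[of z] by (simp add: \<zeta>_def)
  have neg: "z \<in> ball 0 1 \<Longrightarrow> Re (cinner (T z *v y) y) \<le> 0" for z y
    unfolding ReT using zneg[of z] Bpos(2)[of y] by (simp add: mult_nonpos_nonneg)
  have C1: "invertible (T z - mat 1)" if "z \<in> ball 0 1" for z
    using cayley(1)[of "T z", OF neg[OF that]] .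
  have C2: "opnorm (\<psi> z) \<le> 1" if "z \<in> ball 0 1" for z
    unfolding psiT using cayley(2)[of "T z", OF neg[OF that]] .
  have C3: "\<psi> z *v v = v \<Longrightarrow> v = 0" if "z \<in> ball 0 1" for z v
    unfolding psiT using cayley(3)[of "T z", OF neg[OF that]] by blast
  have C4: "(\<psi> z + mat 1) ** matrix_inv (\<psi> z - mat 1) = T z" if "z \<in> ball 0 1" for z
    unfolding psiT using cayley(4)[of "T z", OF neg[OF that]] .
  have inv: "\<forall>z\<in>ball 0 1. invertible (mscale \<i> A + mscale (\<zeta> z) B - mat 1)"
    using C1 unfolding T_def by blast
  have holo: "(\<lambda>z. \<psi> z $ i $ j) holomorphic_on ball 0 1" for i j
  proof -
    have z1: "z - 1 \<noteq> 0" if "dist 0 z < 1" for z :: complex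
    proof
      assume "z - 1 = 0" hence "z = 1" by simp
      with that show False by simp
    qed
    have zh: "\<zeta> holomorphic_on ball 0 1" unfolding \<zeta>_def
      by (rule holomorphic_on_divide) (auto intro: holomorphic_intros simp: z1)
    have Tent: "(\<lambda>z. T z $ a $ b) holomorphic_on ball 0 1" for a b
    proof -
      have eq: "(\<lambda>z. T z $ a $ b) = (\<lambda>z. \<i> * A$a$b + \<zeta> z * B$a$b)"
        by (simp add: T_def mscale_def)
      show ?thesis unfolding eq by (intro holomorphic_intros zh)
    qed
    have Pent: "(\<lambda>z. (T z + mat 1) $ a $ b) holomorphic_on ball 0 1" for a b
    proof -
      have eq: "(\<lambda>z. (T z + mat 1) $ a $ b) = (\<lambda>z. T z $ a $ b + (mat 1 :: complex^'n^'n) $ a $ b)" by simp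
      show ?thesis unfolding eq by (intro holomorphic_on_add Tent holomorphic_on_const)
    qed
    have Ment: "(\<lambda>z. (T z - mat 1) $ a $ b) holomorphic_on ball 0 1" for a b
    proof -
      have eq: "(\<lambda>z. (T z - mat 1) $ a $ b) = (\<lambda>z. T z $ a $ b - (mat 1 :: complex^'n^'n) $ a $ b)" by simp
      show ?thesis unfolding eq by (intro holomorphic_on_diff Tent holomorphic_on_const)
    qed
    have Nent: "(\<lambda>z. matrix_inv (T z - mat 1) $ a $ b) holomorphic_on ball 0 1" for a b
      by (rule holo_inv[OF Ment]) (rule C1)
    have eq: "(\<lambda>z. \<psi> z $ i $ j) = (\<lambda>z. \<Sum>k\<in>UNIV. (T z + mat 1) $ i $ k * matrix_inv (T z - mat 1) $ k $ j)"
      by (simp add: psiT matrix_matrix_mult_def)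
    show ?thesis unfolding eq
      by (intro holomorphic_on_sum holomorphic_on_mult Pent Nent)
  qed
  have cC: "classC \<psi>" unfolding classC_def using holo C2 C3 by blast
  have last: "op_le (ReOp ((\<psi> z + mat 1) ** matrix_inv (\<psi> z - mat 1))) 0
          \<and> op_le (mscale (complex_of_real (Re ((z + 1) / (z - 1)))) (mat 1))
                  (ReOp ((\<psi> z + mat 1) ** matrix_inv (\<psi> z - mat 1)))" if z: "z \<in> ball 0 1" for z
  proof -
    have X: "(\<psi> z + mat 1) ** matrix_inv (\<psi> z - mat 1) = T z" by (rule C4[OF z])
    have r: "Re ((z + 1) / (z - 1)) = Re (\<zeta> z)" by (simp add: \<zeta>_def)
    have "op_le (ReOp (T z)) 0"
    proof -
      have c0: "cinner (0::complex^'n) x = 0" for x by (simp add: cinner_def)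
      show ?thesis unfolding op_le_iff by (simp add: c0 cinner_ReOp neg[OF z])
    qed
    moreover have "op_le (mscale (complex_of_real (Re (\<zeta> z))) (mat 1)) (ReOp (T z))"
      unfolding op_le_iff
    proof
      fix x :: "complex^'n"
      have m: "cinner (mscale (complex_of_real (Re (\<zeta> z))) (mat 1) *v x) x
          = complex_of_real (Re (\<zeta> z) * (norm x)^2)"
        by (simp add: cinner_mscale cinner_self)
      have "Re (\<zeta> z) * (norm x)^2 \<le> Re (\<zeta> z) * Re (cinner (B *v x) x)"
        using zneg[OF z] B_le[OF assms(3), of x] by (simp add: mult_left_mono_neg)
      thus "Im (cinner (ReOp (T z) *v x) x) =
            Im (cinner (mscale (complex_of_real (Re (\<zeta> z))) (mat 1) *v x) x) \<and>
            Re (cinner (mscale (complex_of_real (Re (\<zeta> z))) (mat 1) *v x) x)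
            \<le> Re (cinner (ReOp (T z) *v x) x)"
        unfolding m cinner_ReOp ReT by simp
    qed
    ultimately show ?thesis unfolding X r by blast
  qed
  show ?thesis using inv cC last by blast
qed

end
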